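(* Let $a$ be a (strong) composition with $\ell(a)\le n$. Then $$G^{(\beta)}_a(x_1,\dots,x_n)=\sum_b\beta^{\mathrm{ex}(b)}F_{\mathtt{flat}(b)}(x_1,\dots,x_n),$$ where the sum is over all unsplit glides $b$ of $0^{n-\ell(a)}a$. In particular $G^{(\beta)}_a$ is quasisymmetric.
   Context: A (strong) composition has all entries positive; $\ell(a)$ is its number of entries; $0^m a$ is $a$ with $m$ zeros prepended. Glides: a weak komposition is a weak composition whose positive entries are colored black or red, $\mathrm{ex}(b)$ = number of red entries; for a weak composition or komposition, $\mathtt{flat}$ is the sequence of its nonzero entries (colors forgotten). For a weak composition $a'$ of length $n$ with nonzero entries exactly at positions $n_1<\dots<n_\ell$, a weak komposition $b$ of length $n$ is a glide of $a'$ if there exist $0=i_0<\dots<i_\ell$ with $i_j\le n_j$, $b_k=0$ for $k>i_\ell$, and for each $j$: $b_{i_{j-1}+1}+\dots+b_{i_j}=\mathtt{flat}(a')_j+\#\{\text{red entries among } b_{i_{j-1}+1},\dots,b_{i_j}\}$ and the first nonzero entry among them is black. $\mathcal{G}^{(\beta)}_{a'}(x_1,\dots,x_n)=\sum_b\beta^{\mathrm{ex}(b)}x^b$ over glides $b$ of $a'$. The quasisymmetric glide is $G^{(\beta)}_a(x_1,\dots,x_n)=\mathcal{G}^{(\beta)}_{0^{n-\ell(a)}a}$ if $\ell(a)\le n$ and $0$ otherwise. A glide $b$ of $a'$ is unsplit if $b$ has exactly as many nonzero black entries as $a'$ has nonzero entries, and no zero entry of $b$ lies to the right of a nonzero entry.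 The fundamental quasisymmetric polynomial is $F_\alpha(x_1,\dots,x_n)=\sum x^c$ over weak compositions $c$ of length $n$ with $\mathtt{flat}(c)$ refining $\alpha$ ($c'$ refines $\alpha$ if $\alpha$ is obtained by summing consecutive entries of $c'$). A polynomial is quasisymmetric if the coefficients of $x_{i_1}^{e_1}\cdots x_{i_k}^{e_k}$ and $x_{j_1}^{e_1}\cdots x_{j_k}^{e_k}$ agree for all $i_1<\dots<i_k$, $j_1<\dots<j_k$. *)

theory Defs
  imports Main
begin

text \<open>Weak compositions are lists of naturals (length = number of variables, position k
  (0-indexed) is the exponent of x_(k+1)). Weak kompositions are lists of pairs
  (value, red); the colour of a zero entry is irrelevant and normalised to False (black).\<close>

type_synonym kompo = "(nat \<times> bool) list"

definition flat :: "nat list \<Rightarrow> nat list" where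
  "flat a = filter (\<lambda>x. x \<noteq> 0) a"

definition flatk :: "kompo \<Rightarrow> nat list" where
  "flatk b = filter (\<lambda>x. x \<noteq> 0) (map fst b)"

definition is_red :: "nat \<times> bool \<Rightarrow> bool" where
  "is_red x \<longleftrightarrow> fst x \<noteq> 0 \<and> snd x"

definition is_black_nz :: "nat \<times> bool \<Rightarrow> bool" where
  "is_black_nz x \<longleftrightarrow> fst x \<noteq> 0 \<and> \<not> snd x"

definition ex :: "kompo \<Rightarrow> nat" where
  "ex b = length (filter is_red b)"

definition weak_kompo :: "nat \<Rightarrow> kompo \<Rightarrow> bool" where
  "weak_kompo n b \<longleftrightarrow> length b = n \<and> (\<forall>x\<in>set b. fst x = 0 \<longrightarrow> \<not> snd x)"

text \<open>1-indexed positions of the nonzero entries, increasing.\<close>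
definition nzpos :: "nat list \<Rightarrow> nat list" where
  "nzpos a = filter (\<lambda>k. a ! (k - 1) \<noteq> 0) [1..<length a + 1]"

text \<open>The entries b_(p+1), ..., b_q (1-indexed).\<close>
definition block :: "kompo \<Rightarrow> nat \<Rightarrow> nat \<Rightarrow> kompo" where
  "block b p q = take (q - p) (drop p b)"

definition is_glide :: "nat list \<Rightarrow> kompo \<Rightarrow> bool" where
  "is_glide a' b \<longleftrightarrow>
     (let n = length a'; L = length (flat a'); N = nzpos a' in
      weak_kompo n b \<and>
      (\<exists>i :: nat \<Rightarrow> nat. i 0 = 0 \<and>
         (\<forall>j<L. i j < i (Suc j)) \<and>
         (\<forall>j<L. i (Suc j) \<le> N ! j) \<and>
         (\<forall>k. i L \<le> k \<and> k < n \<longrightarrow> fst (b ! k) = 0) \<and>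
         (\<forall>j<L. let B = block b (i j) (i (Suc j)) in
             sum_list (map fst B) = flat a' ! j + length (filter is_red B) \<and>
             (\<forall>x. find (\<lambda>y. fst y \<noteq> 0) B = Some x \<longrightarrow> \<not> snd x))))"

definition unsplit :: "nat list \<Rightarrow> kompo \<Rightarrow> bool" where
  "unsplit a' b \<longleftrightarrow> length (filter is_black_nz b) = length (flat a') \<and>
     (\<forall>p q. p < q \<and> q < length b \<and> fst (b ! p) \<noteq> 0 \<longrightarrow> fst (b ! q) \<noteq> 0)"

text \<open>Polynomials in x_1..x_n are represented by their coefficient functions on
  exponent vectors (weak compositions of length n).\<close>

definition glide_poly :: "'r::comm_ring_1 \<Rightarrow> nat list \<Rightarrow> nat list \<Rightarrow> 'r" where
  "glide_poly \<beta> a' c = (\<Sum>b\<in>{b. is_glide a' b \<and> map fst b = c}. \<beta> ^ ex b)"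

definition qglide :: "'r::comm_ring_1 \<Rightarrow> nat list \<Rightarrow> nat \<Rightarrow> nat list \<Rightarrow> 'r" where
  "qglide \<beta> a n c =
     (if length a \<le> n then glide_poly \<beta> (replicate (n - length a) 0 @ a) c else 0)"

definition refines :: "nat list \<Rightarrow> nat list \<Rightarrow> bool" where
  "refines c' \<alpha> \<longleftrightarrow> (\<exists>parts. concat parts = c' \<and> map sum_list parts = \<alpha> \<and>
                                (\<forall>p\<in>set parts. p \<noteq> []))"

definition fundF :: "nat list \<Rightarrow> nat \<Rightarrow> nat list \<Rightarrow> 'r::comm_ring_1" where
  "fundF \<alpha> n c = (if length c = n \<and> refines (flat c) \<alpha> then 1 else 0)"

text \<open>Exponent vector of x_(is!0+1)^(es!0) ... (variables 0-indexed).\<close>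
definition mono :: "nat \<Rightarrow> nat list \<Rightarrow> nat list \<Rightarrow> nat list" where
  "mono n is es = map (\<lambda>k. \<Sum>j<length is. if is ! j = k then es ! j else 0) [0..<n]"

definition quasisym :: "nat \<Rightarrow> (nat list \<Rightarrow> 'r) \<Rightarrow> bool" where
  "quasisym n P \<longleftrightarrow> (\<forall>is js es. length is = length es \<and> length js = length es \<and>
      sorted_wrt (<) is \<and> sorted_wrt (<) js \<and> (\<forall>i\<in>set is. i < n) \<and> (\<forall>j\<in>set js. j < n)
      \<longrightarrow> P (mono n is es) = P (mono n js es))"

end

theory Submission
  imports Defs
begin


definition nz :: "kompo \<Rightarrow> kompo" where "nz b = filter (\<lambda>x. fst x \<noteq> 0) b"
definition wt :: "nat \<times> bool \<Rightarrow> nat" where "wt x = fst x - (if snd x then 1 else 0)"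
definition grp :: "nat \<Rightarrow> kompo \<Rightarrow> bool" where
  "grp a0 g \<longleftrightarrow> g \<noteq> [] \<and> \<not> snd (hd g) \<and> (\<forall>x\<in>set g. 0 < fst x) \<and> sum_list (map wt g) = a0"
definition GS :: "nat list \<Rightarrow> kompo \<Rightarrow> bool" where
  "GS a s \<longleftrightarrow> (\<exists>gs. concat gs = s \<and> list_all2 grp a gs)"

lemma sum_wt: "\<forall>x\<in>set s. 0 < fst x \<Longrightarrow>
  sum_list (map wt s) + length (filter snd s) = sum_list (map fst s)"
  by (induction s) (auto simp: wt_def)

lemma flat_pad: "\<forall>x\<in>set a. 0 < x \<Longrightarrow> flat (replicate m 0 @ a) = a"
  unfolding flat_def by (induction m) (auto intro: filter_True)

lemma nzpos_pad: "\<forall>x\<in>set a. 0 < x \<Longrightarrow> j < length a \<Longrightarrow> nzpos (replicate m 0 @ a) ! j = m + j + 1"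
proof -
  assume pos: "\<forall>x\<in>set a. 0 < x" and j: "j < length a"
  have u: "[1..<length (replicate m 0 @ a) + 1] = [1..<m+1] @ [m+1..<m + length a + 1]"
    using upt_add_eq_append[of 1 "m+1" "length a"] by (simp add: ac_simps)
  have f1: "filter (\<lambda>k. (replicate m 0 @ a) ! (k - 1) \<noteq> 0) [1..<m+1] = []"
    by (auto simp: filter_empty_conv nth_append)
  have f2: "filter (\<lambda>k. (replicate m 0 @ a) ! (k - 1) \<noteq> 0) [m+1..<m + length a + 1] = [m+1..<m + length a + 1]"
  proof (rule filter_True, rule ballI)
    fix k assume k1: "k \<in> set [m+1..<m + length a + 1]"
    show "(replicate m 0 @ a) ! (k - 1) \<noteq> 0"
    proof
    assume k2: "(replicate m 0 @ a) ! (k - 1) = 0"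
    note k = k1 k2
    from k(1) have km: "m \<le> k - 1" "k - 1 - m < length a" by auto
    then have "(replicate m 0 @ a) ! (k - 1) = a ! (k - 1 - m)"
      by (simp add: nth_append)
    note this km
    then show False using k(2) pos nth_mem by fastforce
  qed
  qed
  show ?thesis unfolding nzpos_def u filter_append f1 f2 using j by (simp del: upt_Suc)
qed

lemma filter_take_prefix: "filter P (take k xs) = take (length (filter P (take k xs))) (filter P xs)"
proof -
  have "filter P xs = filter P (take k xs) @ filter P (drop k xs)"
    by (metis append_take_drop_id filter_append)
  then show ?thesis by (metis append_eq_conv_conj)
qed

lemma ex_take_count: "t \<le> length (filter P xs) \<Longrightarrow> \<exists>k\<le>length xs. length (filter P (take k xs)) = t"
proof (induction xs arbitrary: t)
  case Nil then show ?case by simp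
next
  case (Cons x xs)
  show ?case
  proof (cases "t = 0")
    case True then show ?thesis by (intro exI[of _ 0]) simp
  next
    case False
    show ?thesis
    proof (cases "P x")
      case True
      have "t - 1 \<le> length (filter P xs)" using Cons.prems True by auto
      then obtain k where "k \<le> length xs" "length (filter P (take k xs)) = t - 1"
        using Cons.IH by blast
      then show ?thesis using True False by (intro exI[of _ "Suc k"]) auto
    next
      case F: False
      have "t \<le> length (filter P xs)" using Cons.prems F by auto
      then obtain k where "k \<le> length xs" "length (filter P (take k xs)) = t"
        using Cons.IH by blast
      then show ?thesis using F by (intro exI[of _ "Suc k"]) auto
    qed
  qed
qed

lemma count_mono: "k1 \<le> k2 \<Longrightarrow> length (filter P (take k1 xs)) \<le> length (filter P (take k2 xs))"
proof -
  assume "k1 \<le> k2"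
  then have "take k2 xs = take k1 xs @ take (k2 - k1) (drop k1 xs)"
    by (metis le_add_diff_inverse take_add)
  then show ?thesis by simp
qed

lemma concat_blocks: "i 0 = 0 \<Longrightarrow> (\<forall>j<k. i j \<le> i (Suc j)) \<Longrightarrow>
  concat (map (\<lambda>j. block b (i j) (i (Suc j))) [0..<k]) = take (i k) b"
proof (induction k)
  case 0 then show ?case by simp
next
  case (Suc k)
  then have "take (i (Suc k)) b = take (i k) b @ block b (i k) (i (Suc k))"
    unfolding block_def by (metis le_add_diff_inverse less_Suc_eq take_add)
  with Suc show ?case by simp
qed

lemma find_filter: "find P xs = (case filter P xs of [] \<Rightarrow> None | x # _ \<Rightarrow> Some x)"
  by (induction xs) auto

lemma len_concat_ge: "\<forall>g\<in>set gs. g \<noteq> [] \<Longrightarrow> length gs \<le> length (concat gs)"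
proof (induction gs)
  case (Cons g gs)
  then have "length g \<ge> 1" by (cases g) auto
  with Cons show ?case by simp
qed simp

lemma concat_slice: "j < length gs \<Longrightarrow>
  drop (length (concat (take j gs))) (take (length (concat (take (Suc j) gs))) (concat gs)) = gs ! j"
proof -
  assume j: "j < length gs"
  have "concat gs = concat (take (Suc j) gs) @ concat (drop (Suc j) gs)"
    by (metis append_take_drop_id concat_append)
  moreover have "take (Suc j) gs = take j gs @ [gs ! j]" using j by (simp add: take_Suc_conv_app_nth)
  ultimately show ?thesis by simp
qed

lemma nz_block_grp:
  assumes "grp a0 (nz B)"
  shows "sum_list (map fst B) = a0 + length (filter is_red B) \<and>
         (\<forall>x. find (\<lambda>y. fst y \<noteq> 0) B = Some x \<longrightarrow> \<not> snd x)"
proof -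
  have r: "filter is_red B = filter snd (nz B)" unfolding nz_def is_red_def
    by (simp add: filter_filter conj_commute)
  have s: "sum_list (map fst B) = sum_list (map fst (nz B))" unfolding nz_def
    by (rule sum_list_map_filter[symmetric]) auto
  have pos: "\<forall>x\<in>set (nz B). 0 < fst x" by (auto simp: nz_def)
  have f: "find (\<lambda>y. fst y \<noteq> 0) B = Some (hd (nz B))" using assms unfolding grp_def find_filter nz_def
    by (auto split: list.splits)
  show ?thesis using assms sum_wt[OF pos] f unfolding grp_def r s by auto
qed

lemma block_nz_grp:
  assumes "sum_list (map fst B) = a0 + length (filter is_red B)"
    and "\<forall>x. find (\<lambda>y. fst y \<noteq> 0) B = Some x \<longrightarrow> \<not> snd x" and "0 < a0"
  shows "grp a0 (nz B)"
proof -
  have r: "filter is_red B = filter snd (nz B)" unfolding nz_def is_red_def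
    by (simp add: filter_filter conj_commute)
  have s: "sum_list (map fst B) = sum_list (map fst (nz B))" unfolding nz_def
    by (rule sum_list_map_filter[symmetric]) auto
  have pos: "\<forall>x\<in>set (nz B). 0 < fst x" by (auto simp: nz_def)
  have ne: "nz B \<noteq> []" using assms(1,3) unfolding s by auto
  have "\<not> snd (hd (nz B))" using assms(2) ne unfolding find_filter nz_def[symmetric]
    by (auto simp: neq_Nil_conv)
  then show ?thesis using sum_wt[OF pos] assms(1) ne pos unfolding grp_def r s by auto
qed

lemma nz_append: "nz (xs @ ys) = nz xs @ nz ys" by (simp add: nz_def)

lemma nz_take_drop: "nz b = nz (take k b) @ nz (drop k b)"
  by (metis append_take_drop_id nz_append)

lemma nz_drop_Nil: "nz (drop k b) = [] \<Longrightarrow> k \<le> q \<Longrightarrow> q < length b \<Longrightarrow> fst (b ! q) = 0"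
proof -
  assume h: "nz (drop k b) = []" "k \<le> q" "q < length b"
  have e: "drop k b ! (q - k) = b ! q" using h(2,3) by simp
  have "q - k < length (drop k b)" using h(2,3) by simp
  then have "b ! q \<in> set (drop k b)" using e nth_mem by metis
  then show ?thesis using h(1) unfolding nz_def by (simp add: filter_empty_conv)
qed

lemma glide_iff:
  assumes pos: "\<forall>x\<in>set a. 0 < x"
  shows "is_glide (replicate m 0 @ a) b \<longleftrightarrow> weak_kompo (m + length a) b \<and> GS a (nz b)"
proof -
  define n where "n = m + length a"
  define L where "L = length a"
  have len: "length (replicate m 0 @ a) = n" by (simp add: n_def)
  note fl = flat_pad[OF pos, of m]
  note np = nzpos_pad[OF pos, of _ m]
  show ?thesis
  proof
    assume "is_glide (replicate m 0 @ a) b"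
    then obtain i where wk: "weak_kompo n b" and i0: "i 0 = 0" and inc: "\<forall>j<L. i j < i (Suc j)"
      and bnd: "\<forall>j<L. i (Suc j) \<le> m + j + 1"
      and tail: "\<forall>k. i L \<le> k \<and> k < n \<longrightarrow> fst (b ! k) = 0"
      and blk: "\<forall>j<L. sum_list (map fst (block b (i j) (i (Suc j)))) = a ! j + length (filter is_red (block b (i j) (i (Suc j))))
             \<and> (\<forall>x. find (\<lambda>y. fst y \<noteq> 0) (block b (i j) (i (Suc j))) = Some x \<longrightarrow> \<not> snd x)"
      unfolding is_glide_def Let_def len fl L_def using np by auto
    have lb: "length b = n" using wk by (simp add: weak_kompo_def)
    define gs where "gs = map (\<lambda>j. nz (block b (i j) (i (Suc j)))) [0..<L]"
    have ct: "concat (map (\<lambda>j. block b (i j) (i (Suc j))) [0..<L]) = take (i L) b"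
      using concat_blocks[of i L b] i0 inc by (simp add: less_imp_le)
    have "concat gs = nz (take (i L) b)"
      unfolding gs_def nz_def ct[symmetric] filter_concat map_map o_def ..
    moreover have "nz (drop (i L) b) = []"
    proof -
      have "\<forall>x\<in>set (drop (i L) b). fst x = 0"
      proof
        fix x assume "x \<in> set (drop (i L) b)"
        then obtain q where "q < length (drop (i L) b)" "x = drop (i L) b ! q" by (metis in_set_conv_nth)
        then show "fst x = 0" using tail lb by auto
      qed
      then show ?thesis by (simp add: nz_def filter_empty_conv)
    qed
    ultimately have cg: "concat gs = nz b" using nz_take_drop[of b "i L"] by simp
    have "list_all2 grp a gs"
    proof (rule list_all2_all_nthI)
      show "length a = length gs" by (simp add: gs_def L_def)
    next
      fix j assume j: "j < length a"
      have "0 < a ! j" using pos j by simp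
      then show "grp (a ! j) (gs ! j)" using blk j block_nz_grp unfolding gs_def L_def by auto
    qed
    then show "weak_kompo (m + length a) b \<and> GS a (nz b)"
      using wk cg unfolding GS_def n_def by auto
  next
    assume "weak_kompo (m + length a) b \<and> GS a (nz b)"
    then obtain gs where wk: "weak_kompo n b" and cg: "concat gs = nz b" and la: "list_all2 grp a gs"
      unfolding GS_def n_def by auto
    have lb: "length b = n" using wk by (simp add: weak_kompo_def)
    have lg: "length gs = L" using la by (simp add: L_def list_all2_lengthD)
    have ne: "\<forall>g\<in>set gs. g \<noteq> []" using la by (auto simp: list_all2_conv_all_nth in_set_conv_nth grp_def)
    define e where "e j = length (concat (take j gs))" for j
    define cnt where "cnt k = length (nz (take k b))" for k
    define i where "i j = (if j = 0 then 0 else SOME k. k \<le> n \<and> cnt k = e j)" for j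
    have esuc: "e (Suc j) = e j + length (gs ! j)" if "j < L" for j
      using that lg by (simp add: e_def take_Suc_conv_app_nth)
    have elt: "e j < e (Suc j)" if "j < L" for j
      using esuc[OF that] ne that lg by (simp add: nth_mem)
    have ele: "e j \<le> length (nz b)" for j
    proof -
      have "concat gs = concat (take j gs) @ concat (drop j gs)" by (metis append_take_drop_id concat_append)
      then show ?thesis unfolding e_def cg[symmetric] by (metis le_add1 length_append)
    qed
    have hi: "i j \<le> n \<and> cnt (i j) = e j" for j
    proof (cases "j = 0")
      case True then show ?thesis by (simp add: i_def cnt_def e_def nz_def)
    next
      case False
      obtain k where "k \<le> length b" "length (filter (\<lambda>x. fst x \<noteq> 0) (take k b)) = e j"
        using ex_take_count[of "e j" "\<lambda>x. fst x \<noteq> 0" b] ele[of j] unfolding nz_def by blast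
      then have "k \<le> n \<and> cnt k = e j" using lb unfolding cnt_def nz_def by simp
      then show ?thesis using False someI[of "\<lambda>k. k \<le> n \<and> cnt k = e j" k] unfolding i_def by simp
    qed
    have inc: "i j < i (Suc j)" if "j < L" for j
    proof (rule ccontr)
      assume "\<not> i j < i (Suc j)"
      then have "cnt (i (Suc j)) \<le> cnt (i j)" unfolding cnt_def nz_def by (simp add: count_mono)
      then show False using hi[of j] hi[of "Suc j"] elt[OF that] by simp
    qed
    have cntd: "length (nz (drop k b)) = length (nz b) - cnt k" for k
      using nz_take_drop[of b k] unfolding cnt_def by simp
    have bnd: "i (Suc j) \<le> m + j + 1" if "j < L" for j
    proof -
      let ?k = "i (Suc j)"
      have "length (nz (drop ?k b)) \<le> n - ?k" using lb length_filter_le[of _ "drop ?k b"] by (simp add: nz_def)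
      moreover have "length (nz (drop ?k b)) = length (concat (drop (Suc j) gs))"
      proof -
        have "concat gs = concat (take (Suc j) gs) @ concat (drop (Suc j) gs)"
          by (metis append_take_drop_id concat_append)
        then show ?thesis using cntd[of ?k] hi[of "Suc j"] cg unfolding e_def by (metis add_diff_cancel_left' length_append)
      qed
      moreover have "length (drop (Suc j) gs) \<le> length (concat (drop (Suc j) gs))"
        using ne by (intro len_concat_ge) (meson in_set_dropD)
      ultimately show ?thesis using lg that hi[of "Suc j"] unfolding n_def L_def by auto
    qed
    have tail: "\<forall>k. i L \<le> k \<and> k < n \<longrightarrow> fst (b ! k) = 0"
    proof (intro allI impI)
      fix k assume k: "i L \<le> k \<and> k < n"
      have "e L = length (nz b)" unfolding e_def cg[symmetric] using lg by simp
      then have "nz (drop (i L) b) = []" using cntd[of "i L"] hi[of L] by simp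
      then show "fst (b ! k) = 0" using nz_drop_Nil k lb by auto
    qed
    have blkeq: "nz (block b (i j) (i (Suc j))) = gs ! j" if "j < L" for j
    proof -
      have tk: "take (i (Suc j)) b = take (i j) b @ block b (i j) (i (Suc j))"
        unfolding block_def using inc[OF that] by (metis le_add_diff_inverse less_imp_le take_add)
      have p1: "nz (take (i (Suc j)) b) = take (e (Suc j)) (nz b)"
        using filter_take_prefix[of _ "i (Suc j)" b] hi[of "Suc j"] unfolding nz_def cnt_def by metis
      have p2: "nz (take (i j) b) = take (e j) (nz b)"
        using filter_take_prefix[of _ "i j" b] hi[of j] unfolding nz_def cnt_def by metis
      have "nz (block b (i j) (i (Suc j))) = drop (e j) (take (e (Suc j)) (nz b))"
        using tk p1 p2 hi[of j] nz_append unfolding cnt_def by (metis append_eq_conv_conj)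
      then show ?thesis using concat_slice[of j gs] that lg cg unfolding e_def by simp
    qed
    have "\<forall>j<L. sum_list (map fst (block b (i j) (i (Suc j)))) = a ! j + length (filter is_red (block b (i j) (i (Suc j))))
             \<and> (\<forall>x. find (\<lambda>y. fst y \<noteq> 0) (block b (i j) (i (Suc j))) = Some x \<longrightarrow> \<not> snd x)"
    proof (intro allI impI)
      fix j assume j: "j < L"
      have "grp (a ! j) (gs ! j)" using la j lg by (simp add: list_all2_conv_all_nth)
      then show "sum_list (map fst (block b (i j) (i (Suc j)))) = a ! j + length (filter is_red (block b (i j) (i (Suc j))))
             \<and> (\<forall>x. find (\<lambda>y. fst y \<noteq> 0) (block b (i j) (i (Suc j))) = Some x \<longrightarrow> \<not> snd x)"
        using nz_block_grp blkeq[OF j] by metis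
    qed
    moreover have "i 0 = 0" by (simp add: i_def)
    ultimately show "is_glide (replicate m 0 @ a) b"
      unfolding is_glide_def Let_def len fl L_def[symmetric]
      using wk inc bnd tail np L_def by (intro conjI exI[of _ i]) auto
  qed
qed



fun mg :: "nat \<times> bool \<Rightarrow> kompo \<Rightarrow> kompo" where
  "mg acc [] = [acc]"
| "mg acc (y # ys) = (if snd y then acc # mg y ys else mg (fst acc + fst y, snd acc) ys)"

definition merge :: "kompo \<Rightarrow> kompo" where
  "merge g = (case g of [] \<Rightarrow> [] | x # xs \<Rightarrow> mg x xs)"

definition grp1 :: "nat \<Rightarrow> kompo \<Rightarrow> bool" where
  "grp1 a0 h \<longleftrightarrow> grp a0 h \<and> (\<forall>x\<in>set (tl h). snd x)"

lemma mg_ne: "mg acc ys \<noteq> []"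
  by (induction ys arbitrary: acc) auto

lemma mg_hd0: "snd (hd (mg acc ys)) = snd acc \<and> fst acc \<le> fst (hd (mg acc ys))"
proof (induction ys arbitrary: acc)
  case (Cons y ys)
  show ?case
  proof (cases "snd y")
    case False
    then show ?thesis using Cons.IH[of "(fst acc + fst y, snd acc)"] by simp
  qed simp
qed simp

lemma mg_hd: "mg acc ys \<noteq> [] \<and> (\<exists>v. hd (mg acc ys) = (v, snd acc) \<and> fst acc \<le> v)"
  using mg_ne[of acc ys] mg_hd0[of acc ys] by (intro conjI exI[of _ "fst (hd (mg acc ys))"]) (auto simp: prod_eq_iff)

lemma mg_tl: "\<forall>x\<in>set (tl (mg acc ys)). snd x"
proof (induction ys arbitrary: acc)
  case (Cons y ys)
  show ?case
  proof (cases "snd y")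
    case True
    have "\<forall>x\<in>set (mg y ys). snd x"
      using Cons.IH[of y] mg_hd[of y ys] True by (cases "mg y ys") auto
    then show ?thesis using True by simp
  next
    case False then show ?thesis using Cons.IH by simp
  qed
qed simp

lemma mg_pos: "0 < fst acc \<Longrightarrow> \<forall>y\<in>set ys. 0 < fst y \<Longrightarrow> \<forall>x\<in>set (mg acc ys). 0 < fst x"
proof (induction ys arbitrary: acc)
  case (Cons y ys)
  have ys: "\<forall>y\<in>set ys. 0 < fst y" "0 < fst y" using Cons.prems by auto
  show ?case
  proof (cases "snd y")
    case True
    have "\<forall>x\<in>set (mg y ys). 0 < fst x" using Cons.IH[OF ys(2) ys(1)] .
    then show ?thesis using True Cons.prems(1) by simp
  next
    case False
    have "0 < fst (fst acc + fst y, snd acc)" using Cons.prems(1) by simp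
    from Cons.IH[OF this ys(1)] show ?thesis using False by simp
  qed
qed simp

lemma mg_wt: "0 < fst acc \<Longrightarrow> \<forall>y\<in>set ys. 0 < fst y \<Longrightarrow>
  sum_list (map wt (mg acc ys)) = wt acc + sum_list (map wt ys)"
  by (induction ys arbitrary: acc) (auto simp: wt_def)

lemma mg_red: "length (filter snd (mg acc ys)) = (if snd acc then 1 else 0) + length (filter snd ys)"
  by (induction ys arbitrary: acc) auto

lemma mg_fst: "sum_list (map fst (mg acc ys)) = fst acc + sum_list (map fst ys)"
  by (induction ys arbitrary: acc) auto

lemma mg_len: "length (mg acc ys) \<le> Suc (length ys)"
  by (induction ys arbitrary: acc) (auto simp: le_SucI)

lemma refines_Nil: "refines [] []"
  unfolding refines_def by (intro exI[of _ "[]"]) simp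

lemma refines_Cons: "refines xs ys \<Longrightarrow> refines (x # xs) (x # ys)"
proof -
  assume "refines xs ys"
  then obtain ps where "concat ps = xs" "map sum_list ps = ys" "\<forall>p\<in>set ps. p \<noteq> []"
    unfolding refines_def by blast
  then show ?thesis unfolding refines_def by (intro exI[of _ "[x] # ps"]) auto
qed

lemma refines_split: "refines ((x1 + x2) # xs) ys \<Longrightarrow> refines (x1 # x2 # xs) ys"
proof -
  assume "refines ((x1 + x2) # xs) ys"
  then obtain ps where ps: "concat ps = (x1 + x2) # xs" "map sum_list ps = ys" "\<forall>p\<in>set ps. p \<noteq> []"
    unfolding refines_def by blast
  then obtain p ps' where "ps = p # ps'" by (cases ps) auto
  with ps obtain q where "p = (x1 + x2) # q" "concat ps' = xs \<or> True"
    by (cases p) auto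
  moreover have "q @ concat ps' = xs" using ps \<open>ps = p # ps'\<close> calculation by simp
  ultimately show ?thesis using ps \<open>ps = p # ps'\<close> unfolding refines_def
    by (intro exI[of _ "(x1 # x2 # q) # ps'"]) auto
qed

lemma refines_append: "refines xs1 ys1 \<Longrightarrow> refines xs2 ys2 \<Longrightarrow> refines (xs1 @ xs2) (ys1 @ ys2)"
proof -
  assume "refines xs1 ys1" "refines xs2 ys2"
  then obtain ps1 ps2 where "concat ps1 = xs1" "map sum_list ps1 = ys1" "\<forall>p\<in>set ps1. p \<noteq> []"
    "concat ps2 = xs2" "map sum_list ps2 = ys2" "\<forall>p\<in>set ps2. p \<noteq> []"
    unfolding refines_def by blast
  then show ?thesis unfolding refines_def by (intro exI[of _ "ps1 @ ps2"]) auto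
qed

lemma mg_ref: "refines (fst acc # map fst ys) (map fst (mg acc ys))"
proof (induction ys arbitrary: acc)
  case Nil then show ?case using refines_Cons[OF refines_Nil] by simp
next
  case (Cons y ys)
  show ?case
  proof (cases "snd y")
    case True then show ?thesis using refines_Cons[OF Cons.IH[of y]] by simp
  next
    case False then show ?thesis using refines_split Cons.IH[of "(fst acc + fst y, snd acc)"] by simp
  qed
qed

lemma mg_inj: "mg x xs = mg x' xs' \<Longrightarrow> map fst (x # xs) = map fst (x' # xs') \<Longrightarrow>
  \<forall>y\<in>set xs. 0 < fst y \<Longrightarrow> x # xs = x' # xs'"
proof (induction xs arbitrary: x x' xs')
  case Nil then show ?case by auto
next
  case (Cons y ys)
  from Cons.prems(2) obtain y' ys' where xs': "xs' = y' # ys'" by (cases xs') auto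
  have fy: "fst y = fst y'" "map fst ys = map fst ys'" "fst x = fst x'" using Cons.prems(2) xs' by auto
  have py: "0 < fst y" using Cons.prems(3) by simp
  show ?case
  proof (cases "snd y")
    case True
    show ?thesis
    proof (cases "snd y'")
      case True
      with \<open>snd y\<close> Cons.prems(1) xs' have "x = x'" "mg y ys = mg y' ys'" by auto
      moreover have "y # ys = y' # ys'" using Cons.IH[OF \<open>mg y ys = mg y' ys'\<close>] fy Cons.prems(3) by simp
      ultimately show ?thesis using xs' by simp
    next
      case False
      with \<open>snd y\<close> Cons.prems(1) xs' have e: "x # mg y ys = mg (fst x' + fst y', snd x') ys'" by simp
      obtain v where "hd (mg (fst x' + fst y', snd x') ys') = (v, snd x')" "fst x' + fst y' \<le> v"
        using mg_hd by fastforce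
      then have "fst x \<ge> fst x' + fst y'" using e by (metis fst_conv list.sel(1))
      then show ?thesis using fy py by simp
    qed
  next
    case False
    show ?thesis
    proof (cases "snd y'")
      case True
      with \<open>\<not> snd y\<close> Cons.prems(1) xs' have e: "mg (fst x + fst y, snd x) ys = x' # mg y' ys'" by simp
      obtain v where "hd (mg (fst x + fst y, snd x) ys) = (v, snd x)" "fst x + fst y \<le> v"
        using mg_hd by fastforce
      then have "fst x' \<ge> fst x + fst y" using e by (metis fst_conv list.sel(1))
      then show ?thesis using fy py by simp
    next
      case False
      with \<open>\<not> snd y\<close> Cons.prems(1) xs' have e: "mg (fst x + fst y, snd x) ys = mg (fst x' + fst y', snd x') ys'" by simp
      have "(fst x + fst y, snd x) # ys = (fst x' + fst y', snd x') # ys'"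
        using Cons.IH[OF e] fy Cons.prems(3) by simp
      then have "snd x = snd x'" "ys = ys'" by auto
      then show ?thesis using fy xs' \<open>\<not> snd y\<close> False by (simp add: prod_eq_iff)
    qed
  qed
qed

lemma merge_grp: "grp a0 g \<Longrightarrow> grp1 a0 (merge g)"
proof -
  assume g: "grp a0 g"
  then obtain x xs where gx: "g = x # xs" unfolding grp_def by (cases g) auto
  have pos: "0 < fst x" "\<forall>y\<in>set xs. 0 < fst y" using g gx unfolding grp_def by auto
  obtain v where h: "hd (mg x xs) = (v, snd x)" "mg x xs \<noteq> []" using mg_hd by blast
  show ?thesis using g gx h mg_tl[of x xs] mg_pos[OF pos] mg_wt[OF pos] unfolding grp1_def grp_def merge_def
    by auto
qed

lemma merge_red: "length (filter snd (merge g)) = length (filter snd g)"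
  by (cases g) (auto simp: merge_def mg_red)

lemma merge_fst: "sum_list (map fst (merge g)) = sum_list (map fst g)"
  by (cases g) (auto simp: merge_def mg_fst)

lemma merge_ref: "refines (map fst g) (map fst (merge g))"
  by (cases g) (auto simp: merge_def mg_ref refines_Nil)

lemma merge_len: "length (merge g) \<le> length g"
  by (cases g) (auto simp: merge_def mg_len)

lemma merge_inj: "grp a0 g \<Longrightarrow> merge g = merge g' \<Longrightarrow> map fst g = map fst g' \<Longrightarrow> g = g'"
proof -
  assume g: "grp a0 g" and m: "merge g = merge g'" and f: "map fst g = map fst g'"
  then obtain x xs where gx: "g = x # xs" unfolding grp_def by (cases g) auto
  then obtain x' xs' where gx': "g' = x' # xs'" using f by (cases g') auto
  show ?thesis using mg_inj[of x xs x' xs'] m f g gx gx' unfolding merge_def grp_def by auto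
qed

lemma hlp_pos: "list_all2 grp as gs \<Longrightarrow> us \<noteq> [] \<Longrightarrow> concat gs = us @ X \<Longrightarrow> 0 < sum_list (map wt us)"
proof -
  assume la: "list_all2 grp as gs" and us: "us \<noteq> []" and c: "concat gs = us @ X"
  obtain h gs' where gs: "gs = h # gs'" using c us by (cases gs) auto
  then obtain a0 as' where "as = a0 # as'" "grp a0 h" using la by (cases as) auto
  then obtain z zs where h: "h = z # zs" "\<not> snd z" "0 < fst z" unfolding grp_def by (cases h) auto
  obtain u us' where u: "us = u # us'" using us by (cases us) auto
  have "u = z" using c gs h u by simp
  then show ?thesis using u h by (simp add: wt_def)
qed

lemma GS_unique: "list_all2 grp a gs \<Longrightarrow> list_all2 grp a gs' \<Longrightarrow> concat gs = concat gs' \<Longrightarrow> gs = gs'"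
proof (induction gs arbitrary: a gs')
  case Nil then show ?case by simp
next
  case (Cons g gs)
  obtain a0 as where a: "a = a0 # as" "grp a0 g" "list_all2 grp as gs" using Cons.prems(1) by (cases a) auto
  obtain g' gs'' where gs': "gs' = g' # gs''" "grp a0 g'" "list_all2 grp as gs''" using Cons.prems(2) a by (cases gs') auto
  have sg: "sum_list (map wt g) = a0" "sum_list (map wt g') = a0" using a gs' unfolding grp_def by auto
  have eq: "g @ concat gs = g' @ concat gs''" using Cons.prems(3) gs' by simp
  then obtain us where us: "(g = g' @ us \<and> us @ concat gs = concat gs'') \<or> (g @ us = g' \<and> concat gs = us @ concat gs'')"
    unfolding append_eq_append_conv2 by blast
  have "us = []"
  proof (rule ccontr)
    assume une: "us \<noteq> []"
    from us show False
    proof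
      assume h: "g = g' @ us \<and> us @ concat gs = concat gs''"
      then have "0 < sum_list (map wt us)" using hlp_pos[OF gs'(3) une, of "concat gs"] h by simp
      moreover have "sum_list (map wt g) = sum_list (map wt g') + sum_list (map wt us)" using h by simp
      ultimately show False using sg by linarith
    next
      assume h: "g @ us = g' \<and> concat gs = us @ concat gs''"
      then have "0 < sum_list (map wt us)" using hlp_pos[OF a(3) une, of "concat gs''"] h by simp
      moreover have "sum_list (map wt g') = sum_list (map wt g) + sum_list (map wt us)" using h by auto
      ultimately show False using sg by linarith
    qed
  qed
  then have "g = g'" "concat gs = concat gs''" using us by auto
  then show ?case using Cons.IH[OF a(3) gs'(3)] gs' by simp
qed

lemma prefix_sum_eq: "(xs::nat list) @ X = ys @ Y \<Longrightarrow> sum_list xs = sum_list ys \<Longrightarrow>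
  \<forall>x\<in>set (xs @ X). 0 < x \<Longrightarrow> xs = ys"
proof -
  assume e: "xs @ X = ys @ Y" and s: "sum_list xs = sum_list ys" and p: "\<forall>x\<in>set (xs @ X). 0 < x"
  obtain us where us: "(xs = ys @ us \<and> us @ X = Y) \<or> (xs @ us = ys \<and> X = us @ Y)"
    using e unfolding append_eq_append_conv2 by blast
  have pu: "\<forall>x\<in>set us. 0 < x" using us p by auto
  have "sum_list us = 0" using us s by auto
  then have "us = []" using pu by (cases us) auto
  then show ?thesis using us by auto
qed

lemma la_pos: "list_all2 grp a gs \<Longrightarrow> \<forall>x\<in>set (concat gs). 0 < fst x"
proof (induction gs arbitrary: a)
  case (Cons g gs)
  then obtain a0 as where "a = a0 # as" "grp a0 g" "list_all2 grp as gs" by (cases a) auto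
  then show ?case using Cons.IH unfolding grp_def by auto
qed simp

lemma groups_inj: "list_all2 grp a gs1 \<Longrightarrow> list_all2 grp a gs2 \<Longrightarrow> map merge gs1 = map merge gs2 \<Longrightarrow>
  map fst (concat gs1) = map fst (concat gs2) \<Longrightarrow> gs1 = gs2"
proof (induction gs1 arbitrary: a gs2)
  case Nil then show ?case by simp
next
  case (Cons g1 r1)
  obtain a0 as where a: "a = a0 # as" "grp a0 g1" "list_all2 grp as r1" using Cons.prems(1) by (cases a) auto
  obtain g2 r2 where g2: "gs2 = g2 # r2" "grp a0 g2" "list_all2 grp as r2" using Cons.prems(2) a by (cases gs2) auto
  have mm: "merge g1 = merge g2" "map merge r1 = map merge r2" using Cons.prems(3) g2 by auto
  have sf: "sum_list (map fst g1) = sum_list (map fst g2)" using merge_fst mm(1) by metis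
  have fe: "map fst g1 @ map fst (concat r1) = map fst g2 @ map fst (concat r2)"
    using Cons.prems(4) g2 by simp
  have p1: "\<forall>x\<in>set (concat (g1 # r1)). 0 < fst x"
    using la_pos[OF Cons.prems(1)] .
  then have "\<forall>x\<in>set (map fst g1 @ map fst (concat r1)). 0 < x" by auto
  then have "map fst g1 = map fst g2" using prefix_sum_eq[OF fe sf] by blast
  then have "g1 = g2" using merge_inj[OF a(2) mm(1)] by blast
  moreover have "r1 = r2" using Cons.IH[OF a(3) g2(3) mm(2)] fe \<open>map fst g1 = map fst g2\<close> by simp
  ultimately show ?case using g2 by simp
qed



definition blk :: "nat list \<Rightarrow> kompo" where "blk q = map (\<lambda>x. (x, False)) q"
definition colorpart :: "nat \<times> bool \<Rightarrow> nat list \<Rightarrow> kompo" where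
  "colorpart x p = (hd p, snd x) # blk (tl p)"
definition colored :: "kompo \<Rightarrow> nat list list \<Rightarrow> kompo" where
  "colored t ps = concat (map2 colorpart t ps)"

lemma colored_Cons: "colored (x # t) (p # ps) = colorpart x p @ colored t ps"
  by (simp add: colored_def)

lemma colored_Nil: "colored [] ps = []"
  by (simp add: colored_def)

lemma colored_append: "colored (t1 @ t2) ps = colored t1 (take (length t1) ps) @ colored t2 (drop (length t1) ps)"
  by (simp add: colored_def zip_append1)

lemma mg_blk: "mg acc (blk q @ R) = mg (fst acc + sum_list q, snd acc) R"
proof (induction q arbitrary: acc)
  case Nil then show ?case by (simp add: blk_def)
next
  case (Cons x q)
  have "mg acc (blk (x # q) @ R) = mg (fst acc + x, snd acc) (blk q @ R)" by (simp add: blk_def)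
  also have "\<dots> = mg (fst acc + x + sum_list q, snd acc) R" using Cons.IH[of "(fst acc + x, snd acc)"] by simp
  finally show ?case by (simp add: add.assoc)
qed

lemma sum_hd_tl: "p \<noteq> [] \<Longrightarrow> hd p + sum_list (tl p) = sum_list (p::nat list)"
  by (cases p) auto

lemma mg_reds: "\<forall>r\<in>set rs. snd r \<Longrightarrow> map sum_list ps = map fst rs \<Longrightarrow> \<forall>p\<in>set ps. p \<noteq> [] \<Longrightarrow>
  mg acc (colored rs ps) = acc # rs"
proof (induction rs arbitrary: acc ps)
  case Nil then show ?case by (simp add: colored_Nil)
next
  case (Cons r rs)
  obtain p ps' where ps: "ps = p # ps'" using Cons.prems(2) by (cases ps) auto
  have pr: "sum_list p = fst r" "map sum_list ps' = map fst rs" "p \<noteq> []" "\<forall>p\<in>set ps'. p \<noteq> []"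
    using Cons.prems ps by auto
  have sr: "snd r" using Cons.prems(1) by simp
  have "mg acc (colored (r # rs) ps) = acc # mg (hd p, True) (blk (tl p) @ colored rs ps')"
    using sr by (simp add: ps colored_Cons colorpart_def)
  also have "\<dots> = acc # mg (sum_list p, True) (colored rs ps')"
    using mg_blk sum_hd_tl[OF pr(3)] by simp
  also have "(sum_list p, True) = r" using pr(1) sr by (simp add: prod_eq_iff)
  also have "mg r (colored rs ps') = r # rs" using Cons.IH[of ps' r] Cons.prems(1) pr by simp
  finally show ?case .
qed

lemma colored_len: "length ps = length t \<Longrightarrow> \<forall>p\<in>set ps. p \<noteq> [] \<Longrightarrow> map fst (colored t ps) = concat ps"
proof (induction t arbitrary: ps)
  case Nil then show ?case by (simp add: colored_Nil)
next
  case (Cons x t)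
  then obtain p ps' where "ps = p # ps'" by (cases ps) auto
  with Cons show ?case by (cases p) (auto simp: colored_Cons colorpart_def blk_def o_def)
qed

lemma colored_wt: "map sum_list ps = map fst t \<Longrightarrow> \<forall>p\<in>set ps. p \<noteq> [] \<and> (\<forall>x\<in>set p. 0 < x) \<Longrightarrow>
  sum_list (map wt (colored t ps)) = sum_list (map wt t) \<and>
  length (filter snd (colored t ps)) = length (filter snd t) \<and>
  (\<forall>x\<in>set (colored t ps). 0 < fst x)"
proof (induction t arbitrary: ps)
  case Nil then show ?case by (simp add: colored_Nil)
next
  case (Cons x t)
  then obtain p ps' where ps: "ps = p # ps'" by (cases ps) auto
  have pr: "sum_list p = fst x" "map sum_list ps' = map fst t" "p \<noteq> []" "\<forall>y\<in>set p. 0 < y"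
    "\<forall>p\<in>set ps'. p \<noteq> [] \<and> (\<forall>x\<in>set p. 0 < x)" using Cons.prems ps by auto
  obtain h q where p: "p = h # q" using pr(3) by (cases p) auto
  have hp: "0 < h" using pr(4) p by simp
  have sbl: "sum_list (map wt (blk q)) = sum_list q" by (induction q) (auto simp: blk_def wt_def)
  have rbl: "length (filter snd (blk q)) = 0" by (simp add: blk_def)
  have pbl: "\<forall>y\<in>set (blk q). 0 < fst y" using pr(4) p by (auto simp: blk_def)
  have "sum_list (map wt (colorpart x p)) = wt x" using sbl pr(1) p hp by (simp add: colorpart_def wt_def)
  moreover have "length (filter snd (colorpart x p)) = (if snd x then 1 else 0)"
    using rbl p by (simp add: colorpart_def)
  moreover have "\<forall>y\<in>set (colorpart x p). 0 < fst y" using pbl p hp by (simp add: colorpart_def)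
  ultimately show ?case using Cons.IH[OF pr(2) pr(5)] by (simp add: ps colored_Cons ball_Un)
qed

lemma SG: "grp1 a0 h \<Longrightarrow> map sum_list ps = map fst h \<Longrightarrow> \<forall>p\<in>set ps. p \<noteq> [] \<and> (\<forall>x\<in>set p. 0 < x) \<Longrightarrow>
  grp a0 (colored h ps) \<and> merge (colored h ps) = h"
proof -
  assume g: "grp1 a0 h" and s: "map sum_list ps = map fst h" and pp: "\<forall>p\<in>set ps. p \<noteq> [] \<and> (\<forall>x\<in>set p. 0 < x)"
  obtain x0 rs where h: "h = x0 # rs" using g unfolding grp1_def grp_def by (cases h) auto
  have x0: "\<not> snd x0" and rs: "\<forall>r\<in>set rs. snd r" using g h unfolding grp1_def grp_def by auto
  obtain p ps' where ps: "ps = p # ps'" using s h by (cases ps) auto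
  have pr: "sum_list p = fst x0" "map sum_list ps' = map fst rs" "p \<noteq> []" "\<forall>p\<in>set ps'. p \<noteq> []"
    using s pp h ps by auto
  have col: "colored h ps = (hd p, False) # (blk (tl p) @ colored rs ps')"
    using x0 by (simp add: h ps colored_Cons colorpart_def)
  have "merge (colored h ps) = mg (hd p, False) (blk (tl p) @ colored rs ps')"
    by (simp add: col merge_def)
  also have "\<dots> = mg (sum_list p, False) (colored rs ps')" using mg_blk sum_hd_tl[OF pr(3)] by simp
  also have "(sum_list p, False) = x0" using pr(1) x0 by (simp add: prod_eq_iff)
  also have "mg x0 (colored rs ps') = x0 # rs" using mg_reds[OF rs pr(2) pr(4)] .
  finally have m: "merge (colored h ps) = h" using h by simp
  have cw: "sum_list (map wt (colored h ps)) = sum_list (map wt h)" "\<forall>x\<in>set (colored h ps). 0 < fst x"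
    using colored_wt[OF s pp] by auto
  have "grp a0 (colored h ps)" using g cw col unfolding grp1_def grp_def by simp
  then show ?thesis using m by simp
qed

lemma Pre: "list_all2 grp1 a hs \<Longrightarrow> map sum_list ps = map fst (concat hs) \<Longrightarrow>
  \<forall>p\<in>set ps. p \<noteq> [] \<and> (\<forall>x\<in>set p. 0 < x) \<Longrightarrow>
  \<exists>gs. colored (concat hs) ps = concat gs \<and> list_all2 grp a gs \<and> map merge gs = hs"
proof (induction hs arbitrary: a ps)
  case Nil then show ?case by (intro exI[of _ "[]"]) (simp add: colored_Nil)
next
  case (Cons h hs)
  obtain a0 as where a: "a = a0 # as" "grp1 a0 h" "list_all2 grp1 as hs" using Cons.prems(1) by (cases a) auto
  let ?p1 = "take (length h) ps" and ?p2 = "drop (length h) ps"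
  have ms: "map sum_list ps = map fst h @ map fst (concat hs)" using Cons.prems(2) by simp
  have m1: "map sum_list ?p1 = map fst h" using ms by (metis append_eq_conv_conj length_map take_map)
  have m2: "map sum_list ?p2 = map fst (concat hs)" using ms by (metis append_eq_conv_conj length_map drop_map)
  have pp1: "\<forall>p\<in>set ?p1. p \<noteq> [] \<and> (\<forall>x\<in>set p. 0 < x)" using Cons.prems(3) by (meson in_set_takeD)
  have pp2: "\<forall>p\<in>set ?p2. p \<noteq> [] \<and> (\<forall>x\<in>set p. 0 < x)" using Cons.prems(3) by (meson in_set_dropD)
  obtain gs where gs: "colored (concat hs) ?p2 = concat gs" "list_all2 grp as gs" "map merge gs = hs"
    using Cons.IH[OF a(3) m2 pp2] by blast
  have sg: "grp a0 (colored h ?p1) \<and> merge (colored h ?p1) = h" using SG[OF a(2) m1 pp1] .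
  have "colored (concat (h # hs)) ps = colored h ?p1 @ colored (concat hs) ?p2"
    by (simp add: colored_append)
  then show ?case using gs sg a(1) by (intro exI[of _ "colored h ?p1 # gs"]) simp
qed



fun place :: "nat list \<Rightarrow> kompo \<Rightarrow> kompo" where
  "place [] s = []"
| "place (x # xs) s = (if x = 0 then (0, False) # place xs s else (x, snd (hd s)) # place xs (tl s))"

lemma flat_Cons: "flat (x # xs) = (if x = 0 then flat xs else x # flat xs)"
  by (simp add: flat_def)

lemma place_props: "map fst s = flat c \<Longrightarrow>
  map fst (place c s) = c \<and> nz (place c s) = s \<and> length (place c s) = length c \<and>
  (\<forall>x\<in>set (place c s). fst x = 0 \<longrightarrow> \<not> snd x)"
proof (induction c arbitrary: s)
  case Nil then show ?case by (simp add: flat_def nz_def)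
next
  case (Cons x xs)
  show ?case
  proof (cases "x = 0")
    case True
    then show ?thesis using Cons.IH[of s] Cons.prems by (simp add: flat_Cons nz_def)
  next
    case False
    then obtain y s' where s: "s = y # s'" "fst y = x" "map fst s' = flat xs"
      using Cons.prems by (cases s) (auto simp: flat_Cons)
    then have "(x, snd y) = y" by (simp add: prod_eq_iff)
    then show ?thesis using Cons.IH[of s'] s False by (simp add: nz_def)
  qed
qed

lemma flat_map_fst: "flat (map fst b) = map fst (nz b)"
  by (simp add: flat_def nz_def filter_map o_def)

lemma flatk_nz: "flatk b = map fst (nz b)"
  by (simp add: flatk_def nz_def filter_map o_def)

lemma place_recover: "\<forall>x\<in>set b. fst x = 0 \<longrightarrow> \<not> snd x \<Longrightarrow> place (map fst b) (nz b) = b"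
proof (induction b)
  case (Cons x b)
  then show ?case by (cases x) (auto simp: nz_def)
qed simp

definition pad :: "nat \<Rightarrow> kompo \<Rightarrow> kompo" where
  "pad n t = replicate (n - length t) (0, False) @ t"

lemma nz_pad: "\<forall>x\<in>set t. 0 < fst x \<Longrightarrow> nz (pad n t) = t"
  by (simp add: pad_def nz_def)

lemma wk_pad: "length t \<le> n \<Longrightarrow> \<forall>x\<in>set t. 0 < fst x \<Longrightarrow> weak_kompo n (pad n t)"
  by (auto simp: pad_def weak_kompo_def)

lemma unsplit_pad:
  assumes "length (filter (\<lambda>x. \<not> snd x) t) = length (flat a')" "\<forall>x\<in>set t. 0 < fst x" "length t \<le> n"
  shows "unsplit a' (pad n t)"
proof -
  have "filter is_black_nz (pad n t) = filter (\<lambda>x. \<not> snd x) t"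
    using assms(2) by (auto simp: pad_def is_black_nz_def intro!: filter_cong)
  moreover have "fst (pad n t ! q) \<noteq> 0" if "p < q" "q < length (pad n t)" "fst (pad n t ! p) \<noteq> 0" for p q
  proof -
    have "\<not> p < n - length t" using that(3) by (auto simp: pad_def nth_append)
    then have q: "\<not> q < n - length t" "q - (n - length t) < length t" using that(1,2) assms(3) by (auto simp: pad_def)
    then have "pad n t ! q = t ! (q - (n - length t))" by (simp add: pad_def nth_append)
    then show ?thesis using assms(2) q(2) nth_mem by fastforce
  qed
  ultimately show ?thesis using assms(1) unfolding unsplit_def by auto
qed

lemma recover_pad0: "\<forall>x\<in>set u. fst x = 0 \<longrightarrow> \<not> snd x \<Longrightarrow>
  \<forall>p q. p < q \<and> q < length u \<and> fst (u ! p) \<noteq> 0 \<longrightarrow> fst (u ! q) \<noteq> 0 \<Longrightarrow>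
  u = replicate (length u - length (nz u)) (0, False) @ nz u"
proof (induction u)
  case Nil then show ?case by (simp add: nz_def)
next
  case (Cons x u)
  show ?case
  proof (cases "fst x = 0")
    case True
    have x: "x = (0, False)" using True Cons.prems(1) by (simp add: prod_eq_iff)
    have h2: "\<forall>p q. p < q \<and> q < length u \<and> fst (u ! p) \<noteq> 0 \<longrightarrow> fst (u ! q) \<noteq> 0"
    proof (intro allI impI)
      fix p q assume "p < q \<and> q < length u \<and> fst (u ! p) \<noteq> 0"
      then show "fst (u ! q) \<noteq> 0" using Cons.prems(2)[rule_format, of "Suc p" "Suc q"] by simp
    qed
    have ih: "u = replicate (length u - length (nz u)) (0, False) @ nz u"
      using Cons.IH Cons.prems(1) h2 by simp
    have "length (nz u) \<le> length u" by (simp add: nz_def)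
    then have "length (x # u) - length (nz (x # u)) = Suc (length u - length (nz u))"
      using True by (simp add: nz_def Suc_diff_le)
    then show ?thesis using ih x True by (simp add: nz_def)
  next
    case False
    have "\<forall>y\<in>set u. fst y \<noteq> 0"
    proof
      fix y assume "y \<in> set u"
      then obtain q where "q < length u" "y = u ! q" by (metis in_set_conv_nth)
      then show "fst y \<noteq> 0" using Cons.prems(2)[rule_format, of 0 "Suc q"] False by simp
    qed
    then have "nz (x # u) = x # u" using False by (simp add: nz_def)
    then show ?thesis by simp
  qed
qed

lemma recover_pad: "weak_kompo n u \<Longrightarrow> unsplit a' u \<Longrightarrow> u = pad n (nz u)"
  using recover_pad0[of u] unfolding weak_kompo_def unsplit_def pad_def by auto

lemma blacks_ge: "list_all2 grp a hs \<Longrightarrow> length a \<le> length (filter (\<lambda>x. \<not> snd x) (concat hs))"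
proof (induction hs arbitrary: a)
  case (Cons h hs)
  then obtain a0 as where a: "a = a0 # as" "grp a0 h" "list_all2 grp as hs" by (cases a) auto
  then obtain x t where "h = x # t" "\<not> snd x" unfolding grp_def by (cases h) auto
  then show ?case using Cons.IH[OF a(3)] a(1) by simp
qed simp

lemma count1: "list_all2 grp a hs \<Longrightarrow> length (filter (\<lambda>x. \<not> snd x) (concat hs)) = length a \<Longrightarrow>
  list_all2 grp1 a hs"
proof (induction hs arbitrary: a)
  case Nil then show ?case by simp
next
  case (Cons h hs)
  then obtain a0 as where a: "a = a0 # as" "grp a0 h" "list_all2 grp as hs" by (cases a) auto
  then obtain x t where h: "h = x # t" "\<not> snd x" unfolding grp_def by (cases h) auto
  have ge: "length as \<le> length (filter (\<lambda>x. \<not> snd x) (concat hs))" using blacks_ge[OF a(3)] .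
  have eq: "Suc (length (filter (\<lambda>x. \<not> snd x) t)) + length (filter (\<lambda>x. \<not> snd x) (concat hs)) = Suc (length as)"
    using Cons.prems(2) h a(1) by simp
  then have t0: "length (filter (\<lambda>x. \<not> snd x) t) = 0" and c: "length (filter (\<lambda>x. \<not> snd x) (concat hs)) = length as"
    using ge by linarith+
  from t0 have "\<forall>y\<in>set t. snd y" by (simp add: filter_empty_conv)
  then have "grp1 a0 h" using a(2) h unfolding grp1_def by simp
  then show ?case using Cons.IH[OF a(3) c] a(1) by simp
qed

lemma count1_rev: "list_all2 grp1 a hs \<Longrightarrow> length (filter (\<lambda>x. \<not> snd x) (concat hs)) = length a"
proof (induction hs arbitrary: a)
  case (Cons h hs)
  then obtain a0 as where a: "a = a0 # as" "grp1 a0 h" "list_all2 grp1 as hs" by (cases a) auto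
  then obtain x t where h: "h = x # t" "\<not> snd x" "\<forall>y\<in>set t. snd y" unfolding grp1_def grp_def by (cases h) auto
  then have "filter (\<lambda>x. \<not> snd x) t = []" by (simp add: filter_empty_conv)
  then show ?case using Cons.IH[OF a(3)] a(1) h by simp
qed simp

lemma la_grp1_grp: "list_all2 grp1 a hs \<Longrightarrow> list_all2 grp a hs"
  by (simp add: grp1_def list_all2_conv_all_nth)

lemma la_merge: "list_all2 grp a gs \<Longrightarrow> list_all2 grp1 a (map merge gs)"
  by (simp add: list_all2_conv_all_nth merge_grp)

lemma concat_merge_props: "length (concat (map merge gs)) \<le> length (concat gs) \<and>
  length (filter snd (concat (map merge gs))) = length (filter snd (concat gs)) \<and>
  refines (map fst (concat gs)) (map fst (concat (map merge gs)))"
proof (induction gs)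
  case Nil then show ?case by (simp add: refines_Nil)
next
  case (Cons g gs)
  then show ?case using merge_len[of g] merge_red[of g] refines_append[OF merge_ref[of g]] by simp
qed

lemma bound_fst: "list_all2 grp a gs \<Longrightarrow> x \<in> set (concat gs) \<Longrightarrow> fst x \<le> sum_list a + 1"
proof (induction gs arbitrary: a)
  case Nil then show ?case by simp
next
  case (Cons g gs)
  then obtain a0 as where a: "a = a0 # as" "grp a0 g" "list_all2 grp as gs" by (cases a) auto
  show ?case
  proof (cases "x \<in> set g")
    case True
    have "wt x \<le> sum_list (map wt g)" using True by (simp add: member_le_sum_list)
    then have "wt x \<le> a0" using a(2) unfolding grp_def by simp
    moreover have "fst x \<le> wt x + 1" by (simp add: wt_def) linarith
    ultimately show ?thesis using a(1) by simp
  next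
    case False
    then have "x \<in> set (concat gs)" using Cons.prems(2) by simp
    then show ?thesis using Cons.IH[OF a(3)] a(1) by simp
  qed
qed

lemma ex_nz: "ex b = length (filter snd (nz b))"
proof -
  have "filter is_red b = filter (\<lambda>x. snd x) (filter (\<lambda>x. fst x \<noteq> 0) b)"
    unfolding filter_filter by (rule filter_cong) (auto simp: is_red_def)
  then show ?thesis by (simp add: ex_def nz_def)
qed



definition grouping :: "nat list \<Rightarrow> kompo \<Rightarrow> kompo list" where
  "grouping a s = (SOME gs. concat gs = s \<and> list_all2 grp a gs)"

definition Phi :: "nat list \<Rightarrow> nat \<Rightarrow> kompo \<Rightarrow> kompo" where
  "Phi a n b = pad n (concat (map merge (grouping a (nz b))))"

lemma grouping: "GS a s \<Longrightarrow> concat (grouping a s) = s \<and> list_all2 grp a (grouping a s)"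
  unfolding GS_def grouping_def by (rule someI_ex)

lemma black_count: "length (filter is_black_nz u) = length (filter (\<lambda>x. \<not> snd x) (nz u))"
proof -
  have "filter is_black_nz u = filter (\<lambda>x. \<not> snd x) (filter (\<lambda>x. fst x \<noteq> 0) u)"
    unfolding filter_filter by (rule filter_cong) (auto simp: is_black_nz_def)
  then show ?thesis by (simp add: nz_def)
qed

lemma Phi_in:
  assumes pos: "\<forall>x\<in>set a. 0 < x"
    and b: "weak_kompo (m + length a) b" "GS a (nz b)" "map fst b = c"
  shows "is_glide (replicate m 0 @ a) (Phi a (m + length a) b) \<and>
         unsplit (replicate m 0 @ a) (Phi a (m + length a) b) \<and>
         refines (flat c) (flatk (Phi a (m + length a) b)) \<and>
         ex (Phi a (m + length a) b) = ex b"
proof -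
  define n where "n = m + length a"
  define gs where "gs = grouping a (nz b)"
  define t where "t = concat (map merge gs)"
  have g: "concat gs = nz b" "list_all2 grp a gs" using grouping[OF b(2)] unfolding gs_def by auto
  have lm: "list_all2 grp1 a (map merge gs)" using la_merge[OF g(2)] .
  have lg: "list_all2 grp a (map merge gs)" using la_grp1_grp[OF lm] .
  have pt: "\<forall>x\<in>set t. 0 < fst x" using la_pos[OF lg] unfolding t_def .
  have cmp: "length t \<le> length (concat gs)"
     "length (filter snd t) = length (filter snd (concat gs))"
     "refines (map fst (concat gs)) (map fst t)"
    using concat_merge_props[of gs] unfolding t_def by auto
  have "length (nz b) \<le> length b" by (simp add: nz_def)
  then have lt: "length t \<le> n" using cmp(1) g(1) b(1) unfolding weak_kompo_def n_def by simp
  have Ph: "Phi a n b = pad n t" unfolding Phi_def t_def gs_def n_def ..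
  have nzp: "nz (pad n t) = t" using nz_pad[OF pt] .
  have gl: "is_glide (replicate m 0 @ a) (pad n t)"
    unfolding glide_iff[OF pos] n_def[symmetric] nzp GS_def
    using wk_pad[OF lt pt] lg unfolding t_def by blast
  have un: "unsplit (replicate m 0 @ a) (pad n t)"
    using unsplit_pad[OF _ pt lt] count1_rev[OF lm] flat_pad[OF pos] unfolding t_def by simp
  have rf: "refines (flat c) (flatk (pad n t))"
    using cmp(3) unfolding b(3)[symmetric] flat_map_fst flatk_nz nzp g(1) .
  have ex: "ex (pad n t) = ex b" unfolding ex_nz nzp using cmp(2) g(1) by simp
  show ?thesis using gl un rf ex Ph unfolding n_def by simp
qed

lemma Phi_inj:
  assumes pos: "\<forall>x\<in>set a. 0 < x"
    and b1: "weak_kompo n b1" "GS a (nz b1)" "map fst b1 = c"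
    and b2: "weak_kompo n b2" "GS a (nz b2)" "map fst b2 = c"
    and e: "Phi a n b1 = Phi a n b2"
  shows "b1 = b2"
proof -
  define gs1 where "gs1 = grouping a (nz b1)"
  define gs2 where "gs2 = grouping a (nz b2)"
  have g1: "concat gs1 = nz b1" "list_all2 grp a gs1" using grouping[OF b1(2)] unfolding gs1_def by auto
  have g2: "concat gs2 = nz b2" "list_all2 grp a gs2" using grouping[OF b2(2)] unfolding gs2_def by auto
  have lg1: "list_all2 grp a (map merge gs1)" using la_grp1_grp[OF la_merge[OF g1(2)]] .
  have lg2: "list_all2 grp a (map merge gs2)" using la_grp1_grp[OF la_merge[OF g2(2)]] .
  have "nz (Phi a n b1) = concat (map merge gs1)" unfolding Phi_def gs1_def[symmetric]
    using nz_pad la_pos[OF lg1] by blast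
  moreover have "nz (Phi a n b2) = concat (map merge gs2)" unfolding Phi_def gs2_def[symmetric]
    using nz_pad la_pos[OF lg2] by blast
  ultimately have "concat (map merge gs1) = concat (map merge gs2)" using e by simp
  then have mm: "map merge gs1 = map merge gs2" using GS_unique[OF lg1 lg2] by blast
  have "map fst (concat gs1) = map fst (concat gs2)"
    using g1(1) g2(1) b1(3) b2(3) flat_map_fst by metis
  then have "gs1 = gs2" using groups_inj[OF g1(2) g2(2) mm] by blast
  then have nzq: "nz b1 = nz b2" using g1(1) g2(1) by simp
  have "b1 = place (map fst b1) (nz b1)" using place_recover b1(1) unfolding weak_kompo_def by metis
  also have "\<dots> = place (map fst b2) (nz b2)" using nzq b1(3) b2(3) by simp
  also have "\<dots> = b2" using place_recover b2(1) unfolding weak_kompo_def by metis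
  finally show ?thesis .
qed

lemma Phi_surj:
  assumes pos: "\<forall>x\<in>set a. 0 < x"
    and u: "is_glide (replicate m 0 @ a) u" "unsplit (replicate m 0 @ a) u" "refines (flat c) (flatk u)"
    and lc: "length c = m + length a"
  shows "\<exists>b. weak_kompo (m + length a) b \<and> GS a (nz b) \<and> map fst b = c \<and> Phi a (m + length a) b = u"
proof -
  define n where "n = m + length a"
  have wk: "weak_kompo n u" and gsu: "GS a (nz u)" using u(1) unfolding glide_iff[OF pos] n_def by auto
  then obtain hs where hs: "concat hs = nz u" "list_all2 grp a hs" unfolding GS_def by blast
  have up: "u = pad n (nz u)" using recover_pad[OF wk u(2)] .
  have "length (filter (\<lambda>x. \<not> snd x) (nz u)) = length a"
    using u(2) black_count[of u] flat_pad[OF pos, of m] unfolding unsplit_def by simp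
  then have l1: "list_all2 grp1 a hs" using count1[OF hs(2)] hs(1) by simp
  obtain ps where ps: "concat ps = flat c" "map sum_list ps = flatk u" "\<forall>p\<in>set ps. p \<noteq> []"
    using u(3) unfolding refines_def by blast
  have pp: "\<forall>p\<in>set ps. p \<noteq> [] \<and> (\<forall>x\<in>set p. 0 < x)"
  proof
    fix p assume p: "p \<in> set ps"
    have "set p \<subseteq> set (concat ps)" using p by auto
    then have "\<forall>x\<in>set p. x \<in> set (flat c)" using ps(1) by auto
    then show "p \<noteq> [] \<and> (\<forall>x\<in>set p. 0 < x)" using ps(3) p by (auto simp: flat_def)
  qed
  have ms: "map sum_list ps = map fst (concat hs)" using ps(2) hs(1) flatk_nz by simp
  obtain gs where gs: "colored (concat hs) ps = concat gs" "list_all2 grp a gs" "map merge gs = hs"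
    using Pre[OF l1 ms pp] by blast
  define s where "s = colored (nz u) ps"
  have "length (map sum_list ps) = length (map fst (concat hs))" using ms by simp
  then have lps: "length ps = length (nz u)" using hs(1) by simp
  have ms2: "map fst s = flat c" unfolding s_def using colored_len[OF lps ps(3)] ps(1) by simp
  define b where "b = place c s"
  have pl: "map fst b = c" "nz b = s" "length b = length c" "\<forall>x\<in>set b. fst x = 0 \<longrightarrow> \<not> snd x"
    using place_props[OF ms2] unfolding b_def by auto
  have wkb: "weak_kompo n b" using pl lc unfolding weak_kompo_def n_def by simp
  have sg: "s = concat gs" using gs(1) hs(1) unfolding s_def by simp
  have gsb: "GS a (nz b)" unfolding GS_def pl(2) using sg gs(2) by blast
  have gr: "concat (grouping a (nz b)) = nz b" "list_all2 grp a (grouping a (nz b))"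
    using grouping[OF gsb] by auto
  have "concat (grouping a (nz b)) = concat gs" using gr(1) pl(2) sg by simp
  then have "grouping a (nz b) = gs" using GS_unique[OF gr(2) gs(2)] by simp
  then have "Phi a n b = pad n (concat hs)" unfolding Phi_def using gs(3) by simp
  then have "Phi a n b = u" using hs(1) up by simp
  then show ?thesis using wkb gsb pl(1) unfolding n_def by blast
qed



lemma glide_len: "\<forall>x\<in>set a. 0 < x \<Longrightarrow> is_glide (replicate m 0 @ a) b \<Longrightarrow> length b = m + length a"
  using glide_iff[of a m b] unfolding weak_kompo_def by simp

lemma finite_glides:
  assumes pos: "\<forall>x\<in>set a. 0 < x"
  shows "finite {b. is_glide (replicate m 0 @ a) b}"
proof -
  let ?A = "{0..sum_list a + 1} \<times> (UNIV :: bool set)"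
  have "{b. is_glide (replicate m 0 @ a) b} \<subseteq> {xs. set xs \<subseteq> ?A \<and> length xs = m + length a}"
  proof
    fix b assume "b \<in> {b. is_glide (replicate m 0 @ a) b}"
    then have wk: "weak_kompo (m + length a) b" and "GS a (nz b)" using glide_iff[OF pos] by auto
    then obtain gs where gs: "concat gs = nz b" "list_all2 grp a gs" unfolding GS_def by blast
    have "set b \<subseteq> ?A"
    proof
      fix x assume x: "x \<in> set b"
      show "x \<in> ?A"
      proof (cases "fst x = 0")
        case True then show ?thesis by (cases x) auto
      next
        case False
        then have "x \<in> set (concat gs)" using x gs(1) by (simp add: nz_def)
        then have "fst x \<le> sum_list a + 1" using bound_fst[OF gs(2)] by blast
        then show ?thesis by (cases x) auto
      qed
    qed
    then show "b \<in> {xs. set xs \<subseteq> ?A \<and> length xs = m + length a}" using wk unfolding weak_kompo_def by simp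
  qed
  moreover have "finite {xs. set xs \<subseteq> ?A \<and> length xs = m + length a}"
    by (rule finite_lists_length_eq) simp
  ultimately show ?thesis using finite_subset by blast
qed

lemma main_eq:
  fixes \<beta> :: "'r::comm_ring_1"
  assumes pos: "\<forall>x\<in>set a. 0 < x"
  shows "glide_poly \<beta> (replicate m 0 @ a) c =
    (\<Sum>b\<in>{b. is_glide (replicate m 0 @ a) b \<and> unsplit (replicate m 0 @ a) b}.
       \<beta> ^ ex b * fundF (flatk b) (m + length a) c)"
proof -
  define a' where "a' = replicate m 0 @ a"
  define n where "n = m + length a"
  define U where "U = {b. is_glide a' b \<and> unsplit a' b}"
  define S where "S = {b. is_glide a' b \<and> map fst b = c}"
  have finU: "finite U" using finite_glides[OF pos, of m] unfolding U_def a'_def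
    by (rule finite_subset[rotated]) auto
  have lhs: "glide_poly \<beta> a' c = (\<Sum>b\<in>S. \<beta> ^ ex b)" unfolding glide_poly_def S_def ..
  show ?thesis
  proof (cases "length c = n")
    case False
    have "S = {}" using glide_len[OF pos] False unfolding S_def a'_def n_def by auto
    moreover have "\<forall>b\<in>U. \<beta> ^ ex b * fundF (flatk b) n c = 0" using False by (simp add: fundF_def)
    ultimately show ?thesis using lhs unfolding a'_def[symmetric] n_def[symmetric] U_def[symmetric] by simp
  next
    case True
    define T where "T = {u\<in>U. refines (flat c) (flatk u)}"
    have "(\<Sum>b\<in>U. \<beta> ^ ex b * fundF (flatk b) n c) = (\<Sum>b\<in>T. \<beta> ^ ex b * fundF (flatk b) n c)"
      by (rule sum.mono_neutral_right[OF finU]) (auto simp: T_def fundF_def True)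
    also have "\<dots> = (\<Sum>b\<in>T. \<beta> ^ ex b)" by (rule sum.cong) (auto simp: T_def fundF_def True)
    finally have rhs: "(\<Sum>b\<in>U. \<beta> ^ ex b * fundF (flatk b) n c) = (\<Sum>b\<in>T. \<beta> ^ ex b)" .
    have Sc: "S = {b. weak_kompo n b \<and> GS a (nz b) \<and> map fst b = c}"
      unfolding S_def a'_def n_def glide_iff[OF pos] by simp
    have bij: "bij_betw (Phi a n) S T"
    proof (rule bij_betw_imageI)
      show "inj_on (Phi a n) S"
        unfolding inj_on_def Sc using Phi_inj[OF pos] by blast
      show "Phi a n ` S = T"
      proof
        show "Phi a n ` S \<subseteq> T"
        proof
          fix u assume "u \<in> Phi a n ` S"
          then obtain b where b: "b \<in> S" "u = Phi a n b" by blast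
          then show "u \<in> T" using Phi_in[OF pos, of m b c] unfolding Sc T_def U_def a'_def n_def by auto
        qed
        show "T \<subseteq> Phi a n ` S"
        proof
          fix u assume "u \<in> T"
          then have "is_glide a' u" "unsplit a' u" "refines (flat c) (flatk u)" unfolding T_def U_def by auto
          then obtain b where "weak_kompo n b" "GS a (nz b)" "map fst b = c" "Phi a n b = u"
            using Phi_surj[OF pos, of m u c] True unfolding a'_def n_def by blast
          then show "u \<in> Phi a n ` S" unfolding Sc by blast
        qed
      qed
    qed
    have exeq: "\<forall>b\<in>S. ex (Phi a n b) = ex b"
      using Phi_in[OF pos] unfolding Sc n_def by blast
    have "(\<Sum>b\<in>S. \<beta> ^ ex b) = (\<Sum>b\<in>S. \<beta> ^ ex (Phi a n b))" using exeq by simp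
    also have "\<dots> = (\<Sum>b\<in>T. \<beta> ^ ex b)" by (rule sum.reindex_bij_betw[OF bij])
    finally show ?thesis using lhs rhs unfolding a'_def[symmetric] n_def[symmetric] U_def[symmetric] by simp
  qed
qed

lemma filter_map_restrict: "(\<forall>x. \<not> Q x \<longrightarrow> \<not> P (g x)) \<Longrightarrow> filter P (map g xs) = filter P (map g (filter Q xs))"
  by (induction xs) auto

lemma mono_flat:
  assumes s: "sorted_wrt (<) is" and b: "\<forall>i\<in>set is. i < n" and l: "length is = length es"
  shows "length (mono n is es) = n \<and> flat (mono n is es) = flat es"
proof -
  define g where "g k = (\<Sum>j<length is. if is ! j = k then es ! j else 0)" for k
  have m: "mono n is es = map g [0..<n]" unfolding mono_def g_def ..
  have d: "distinct is" using s strict_sorted_iff by blast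
  have g0: "g k = 0" if "k \<notin> set is" for k
    using that unfolding g_def by (auto intro!: sum.neutral simp: nth_mem)
  have gi: "g (is ! j) = es ! j" if "j < length is" for j
  proof -
    have "g (is ! j) = (\<Sum>i<length is. if i = j then es ! i else 0)"
      unfolding g_def using d that by (intro sum.cong) (auto simp: nth_eq_iff_index_eq)
    then show ?thesis using that by simp
  qed
  have fe: "filter (\<lambda>k. k \<in> set is) [0..<n] = is"
  proof (rule sorted_distinct_set_unique)
    show "sorted (filter (\<lambda>k. k \<in> set is) [0..<n])" by (simp add: sorted_wrt_filter)
    show "distinct (filter (\<lambda>k. k \<in> set is) [0..<n])" by simp
    show "sorted is" "distinct is" using s strict_sorted_iff by auto
    show "set (filter (\<lambda>k. k \<in> set is) [0..<n]) = set is" using b by auto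
  qed
  have me: "map g is = es" using l gi by (intro nth_equalityI) auto
  have "flat (map g [0..<n]) = filter (\<lambda>x. x \<noteq> 0) (map g (filter (\<lambda>k. k \<in> set is) [0..<n]))"
    unfolding flat_def using g0 by (intro filter_map_restrict) auto
  then have "flat (map g [0..<n]) = flat es" unfolding fe me flat_def .
  then show ?thesis unfolding m by simp
qed

theorem mainTheorem7:
  fixes \<beta> :: "'r::comm_ring_1" and a :: "nat list" and n :: nat
  assumes "\<forall>x\<in>set a. 0 < x" and "length a \<le> n"
  shows "(\<forall>c. qglide \<beta> a n c =
            (\<Sum>b\<in>{b. is_glide (replicate (n - length a) 0 @ a) b \<and>
                      unsplit (replicate (n - length a) 0 @ a) b}.
               \<beta> ^ ex b * fundF (flatk b) n c))
         \<and> quasisym n (qglide \<beta> a n)"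
proof -
  have nn: "n - length a + length a = n" using assms(2) by simp
  have p1: "qglide \<beta> a n c =
            (\<Sum>b\<in>{b. is_glide (replicate (n - length a) 0 @ a) b \<and>
                      unsplit (replicate (n - length a) 0 @ a) b}.
               \<beta> ^ ex b * fundF (flatk b) n c)" for c
  proof -
    have "qglide \<beta> a n c = glide_poly \<beta> (replicate (n - length a) 0 @ a) c"
      using assms(2) unfolding qglide_def by simp
    also have "\<dots> = (\<Sum>b\<in>{b. is_glide (replicate (n - length a) 0 @ a) b \<and>
                      unsplit (replicate (n - length a) 0 @ a) b}.
               \<beta> ^ ex b * fundF (flatk b) (n - length a + length a) c)"
      by (rule main_eq[OF assms(1)])
    finally show ?thesis unfolding nn .
  qed
  have fF: "fundF \<alpha> n (mono n ii es) = (fundF \<alpha> n (mono n js es) :: 'r)"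
    if "length ii = length es" "length js = length es" "sorted_wrt (<) ii" "sorted_wrt (<) js"
       "\<forall>i\<in>set ii. i < n" "\<forall>j\<in>set js. j < n" for \<alpha> ii js es
  proof -
    have "length (mono n ii es) = n \<and> flat (mono n ii es) = flat es" using mono_flat that by blast
    moreover have "length (mono n js es) = n \<and> flat (mono n js es) = flat es" using mono_flat that by blast
    ultimately show ?thesis unfolding fundF_def by simp
  qed
  have p2: "quasisym n (qglide \<beta> a n)"
    unfolding quasisym_def
  proof (intro allI impI)
    fix ii js :: "nat list" and es :: "nat list"
    assume h: "length ii = length es \<and> length js = length es \<and> sorted_wrt (<) ii \<and> sorted_wrt (<) js \<and>
       (\<forall>i\<in>set ii. i < n) \<and> (\<forall>j\<in>set js. j < n)"
    show "qglide \<beta> a n (mono n ii es) = qglide \<beta> a n (mono n js es)"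
    proof -
      have "fundF \<alpha> n (mono n ii es) = (fundF \<alpha> n (mono n js es) :: 'r)" for \<alpha>
        using h by (intro fF) auto
      then show ?thesis unfolding p1 by simp
    qed
  qed
  have p1': "\<forall>c. qglide \<beta> a n c =
            (\<Sum>b\<in>{b. is_glide (replicate (n - length a) 0 @ a) b \<and>
                      unsplit (replicate (n - length a) 0 @ a) b}.
               \<beta> ^ ex b * fundF (flatk b) n c)" using p1 by blast
  show ?thesis using p1' p2 by blast
qed


end
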